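(* Let $q=2^m$ and let $\mathbf{H}$ be a binary $r\times N$ matrix in which every column contains exactly two entries equal to $1$, with Tanner graph $\mathcal{G}$. For every check node $i$ choose a nonzero $a_i\in\mathbb{F}_q$, and for every edge $(i,j)$ of $\mathcal{G}$ (check $i$, variable $j$) choose a nonzero $b_{ij}\in\mathbb{F}_q$. For each variable node $j$, with $i$ and $k$ the two check nodes adjacent to $j$, define the labels $x_{ij}=a_i b_{ij}b_{kj}$ and $x_{kj}=a_k b_{kj}b_{ij}$. Then for every cycle $\mathcal{C}$ of $\mathcal{G}$, the product $\Pi(\mathcal{C})$ of the labels over $\mathcal{C}$ equals $1$.
   Context: The Tanner graph of an $r\times N$ matrix $(H_{ij})$ is the bipartite graph with variable nodes indexed by columns, check nodes indexed by rows, and an edge between check $i$ and variable $j$ iff $H_{ij}\neq0$; here each edge $(i,j)$ carries the label $x_{ij}\in\mathbb{F}_q\setminus\{0\}$. For a cycle $\mathcal{C}=v_1,c_1,v_2,c_2,\dots,v_k,c_k,v_1$ (alternating variable nodes $v_t$ and check nodes $c_t$), the product over the cycle is $\Pi(\mathcal{C})=\prod_{t=1}^{k} x_{c_t v_{t+1}}\,x_{c_t v_t}^{-1}$ (indices of $v$ mod $k$), i.e. each label is raised to the power $1$ for check-to-variable edges and $-1$ for variable-to-check edges along the traversal. *)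

theory Defs
  imports Main
begin

definition binary_matrix :: "(nat \<Rightarrow> nat \<Rightarrow> nat) \<Rightarrow> nat \<Rightarrow> nat \<Rightarrow> bool" where
  "binary_matrix H r N \<longleftrightarrow> (\<forall>i<r. \<forall>j<N. H i j \<in> {0, 1})"

definition tanner_edge :: "(nat \<Rightarrow> nat \<Rightarrow> nat) \<Rightarrow> nat \<Rightarrow> nat \<Rightarrow> nat \<Rightarrow> nat \<Rightarrow> bool" where
  "tanner_edge H r N i j \<longleftrightarrow> i < r \<and> j < N \<and> H i j \<noteq> 0"

definition tanner_cycle :: "(nat \<Rightarrow> nat \<Rightarrow> nat) \<Rightarrow> nat \<Rightarrow> nat \<Rightarrow> nat \<Rightarrow> (nat \<Rightarrow> nat) \<Rightarrow> (nat \<Rightarrow> nat) \<Rightarrow> bool" where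
  "tanner_cycle H r N k v c \<longleftrightarrow>
     k \<ge> 2 \<and> inj_on v {..<k} \<and> inj_on c {..<k} \<and>
     (\<forall>t<k. tanner_edge H r N (c t) (v t) \<and> tanner_edge H r N (c t) (v ((t + 1) mod k)))"

text \<open>Product of the labels over a cycle: each check-to-variable edge (c_t, v_{t+1})
  contributes x, each variable-to-check edge (v_t, c_t) contributes x^{-1}.\<close>

definition cycle_product :: "(nat \<Rightarrow> nat \<Rightarrow> 'a::field) \<Rightarrow> nat \<Rightarrow> (nat \<Rightarrow> nat) \<Rightarrow> (nat \<Rightarrow> nat) \<Rightarrow> 'a" where
  "cycle_product x k v c = (\<Prod>t<k. x (c t) (v ((t + 1) mod k)) * inverse (x (c t) (v t)))"

end

theory Submission
  imports Defs
begin

lemma prod_shift_mod: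
  fixes f :: "nat \<Rightarrow> 'a::comm_monoid_mult"
  assumes "k > 0"
  shows "(\<Prod>t<k. f ((t + 1) mod k)) = (\<Prod>t<k. f t)"
proof -
  obtain n where k: "k = Suc n" using assms by (cases k) auto
  have "(\<Prod>t<Suc n. f ((t + 1) mod Suc n)) = (\<Prod>t<n. f ((t + 1) mod Suc n)) * f 0"
    by (simp add: prod.lessThan_Suc)
  also have "(\<Prod>t<n. f ((t + 1) mod Suc n)) = (\<Prod>t<n. f (Suc t))"
    by (rule prod.cong) auto
  also have "(\<Prod>t<n. f (Suc t)) * f 0 = (\<Prod>t<Suc n. f t)"
    using prod.lessThan_Suc_shift[of f n] by (simp only: mult.commute)
  finally show ?thesis using k by simp
qed

lemma prod_shift_prev:
  fixes f :: "nat \<Rightarrow> 'a::comm_monoid_mult"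
  assumes "k > 0"
  shows "(\<Prod>t<k. f ((t + k - 1) mod k)) = (\<Prod>t<k. f t)"
proof -
  have "(\<Prod>t<k. f ((t + k - 1) mod k)) = (\<Prod>t<k. f ((((t + 1) mod k) + k - 1) mod k))"
    using prod_shift_mod[OF assms, of "\<lambda>s. f ((s + k - 1) mod k)"] by simp
  also have "\<dots> = (\<Prod>t<k. f t)"
  proof (rule prod.cong)
    fix t assume t: "t \<in> {..<k}"
    have "(((t + 1) mod k) + k - 1) mod k = t"
    proof (cases "t + 1 = k")
      case True then show ?thesis using t by simp
    next
      case False
      then have "(t + 1) mod k = t + 1" using t by simp
      then have "(((t + 1) mod k) + k - 1) = t + k" by simp
      then show ?thesis using t by simp
    qed
    then show "f ((((t + 1) mod k) + k - 1) mod k) = f t" by simp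
  qed simp
  finally show ?thesis .
qed

theorem mainTheorem3:
  fixes H :: "nat \<Rightarrow> nat \<Rightarrow> nat" and r N m :: nat
    and a :: "nat \<Rightarrow> 'a::{field, finite}" and b x :: "nat \<Rightarrow> nat \<Rightarrow> 'a"
  assumes q: "card (UNIV :: 'a set) = 2 ^ m"
    and bin: "binary_matrix H r N"
    and colw: "\<forall>j<N. card {i. i < r \<and> H i j = 1} = 2"
    and a_nz: "\<forall>i<r. a i \<noteq> 0"
    and b_nz: "\<forall>i j. tanner_edge H r N i j \<longrightarrow> b i j \<noteq> 0"
    and lab: "\<forall>j<N. \<forall>i k. tanner_edge H r N i j \<and> tanner_edge H r N k j \<and> i \<noteq> k
                 \<longrightarrow> x i j = a i * b i j * b k j"
  shows "\<forall>k v c. tanner_cycle H r N k v c \<longrightarrow> cycle_product x k v c = 1"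
proof (intro allI impI)
  fix k v c assume cyc: "tanner_cycle H r N k v c"
  have k2: "k \<ge> 2" and injc: "inj_on c {..<k}"
    and E: "\<And>t. t < k \<Longrightarrow> tanner_edge H r N (c t) (v t) \<and> tanner_edge H r N (c t) (v ((t + 1) mod k))"
    using cyc unfolding tanner_cycle_def by auto
  define s where "s t = (t + 1) mod k" for t
  define p where "p t = (t + k - 1) mod k" for t
  define B where "B t = b (c t) (v t)" for t
  define D where "D t = b (c t) (v (s t))" for t
  have k0: "k > 0" using k2 by simp
  have sk: "s t < k" for t using k0 by (simp add: s_def)
  have pk: "p t < k" for t using k0 by (simp add: p_def)
  have sp: "s (p t) = t" if "t < k" for t
  proof (cases "t = 0")
    case True then show ?thesis using k2 by (simp add: s_def p_def)
  next
    case False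
    then have e: "t + k - 1 = (t - 1) + k" by arith
    have "p t = ((t - 1) + k) mod k" unfolding p_def e ..
    then have "p t = t - 1" using that by simp
    then show ?thesis using False that by (simp add: s_def)
  qed
  have neq: "c t \<noteq> c (s t)" if "t < k" for t
  proof
    assume "c t = c (s t)"
    then have "t = s t" using injc that sk by (auto dest: inj_onD)
    then show False
    proof (cases "t + 1 < k")
      case True
      then have "s t = t + 1" by (simp add: s_def)
      then show False using \<open>t = s t\<close> by simp
    next
      case False
      then have "t + 1 = k" using that by simp
      then have "s t = 0" by (simp add: s_def)
      then show False using \<open>t = s t\<close> \<open>t + 1 = k\<close> k2 by simp
    qed
  qed
  have Bnz: "B t \<noteq> 0" if "t < k" for t using b_nz E[OF that] by (simp add: B_def)
  have Dnz: "D t \<noteq> 0" if "t < k" for t using b_nz E[OF that] by (simp add: D_def s_def)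
  have anz: "a (c t) \<noteq> 0" if "t < k" for t using a_nz E[OF that] by (simp add: tanner_edge_def)
  have x1: "x (c t) (v (s t)) = a (c t) * D t * B (s t)" if "t < k" for t
  proof -
    have e1: "tanner_edge H r N (c t) (v (s t))" using E[OF that] by (simp add: s_def)
    have e2: "tanner_edge H r N (c (s t)) (v (s t))" using E[OF sk] by blast
    have "v (s t) < N" using e1 by (simp add: tanner_edge_def)
    then show ?thesis using lab e1 e2 neq[OF that] by (simp add: D_def B_def)
  qed
  have x2: "x (c t) (v t) = a (c t) * B t * D (p t)" if "t < k" for t
  proof -
    have e1: "tanner_edge H r N (c t) (v t)" using E[OF that] by blast
    have e2: "tanner_edge H r N (c (p t)) (v t)" using E[OF pk, of t] sp[OF that] by (simp add: s_def)
    have ne: "c t \<noteq> c (p t)" using neq[OF pk, of t] sp[OF that] by simp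
    have "v t < N" using e1 by (simp add: tanner_edge_def)
    then show ?thesis using lab e1 e2 ne sp[OF that] by (simp add: D_def B_def)
  qed
  have "cycle_product x k v c = (\<Prod>t<k. (D t / D (p t)) * (B (s t) / B t))"
    unfolding cycle_product_def
  proof (rule prod.cong)
    fix t assume t: "t \<in> {..<k}"
    then have t': "t < k" by simp
    have st: "(t + 1) mod k = s t" by (simp add: s_def)
    show "x (c t) (v ((t + 1) mod k)) * inverse (x (c t) (v t)) = D t / D (p t) * (B (s t) / B t)"
      using x1[OF t'] x2[OF t'] anz[OF t'] Bnz[OF t'] Dnz[OF pk]
      unfolding st by (simp add: field_simps)
  qed simp
  also have "\<dots> = ((\<Prod>t<k. D t) / (\<Prod>t<k. D (p t))) * ((\<Prod>t<k. B (s t)) / (\<Prod>t<k. B t))"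
    by (simp add: prod.distrib prod_dividef)
  also have "(\<Prod>t<k. D (p t)) = (\<Prod>t<k. D t)"
    unfolding p_def by (rule prod_shift_prev[OF k0])
  also have "(\<Prod>t<k. B (s t)) = (\<Prod>t<k. B t)"
    unfolding s_def by (rule prod_shift_mod[OF k0])
  also have "(\<Prod>t<k. D t) \<noteq> 0" using Dnz by simp
  moreover have "(\<Prod>t<k. B t) \<noteq> 0" using Bnz by simp
  ultimately show "cycle_product x k v c = 1" by simp
qed

end
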